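(* Let $R$ be a commutative ring of characteristic zero and $P \subseteq R$ a subsemiring (i.e. $P + P \subseteq P$, $PP \subseteq P$, $0, 1 \in P$). Suppose that there is $v \in P$ such that for every $a \in R$ there is $p \in \mathbb{N}[X]$ with $p(v) - a \in P$. Then for every $a \in R$, the following are equivalent: (1) $f(a) \geq 0$ for every ring homomorphism $f : R \to \mathbb{R}$ with $f(P) \subseteq \mathbb{R}_+$. (2) For every $r \in \mathbb{R}_+$ and $\varepsilon > 0$, there exist a polynomial $q \in \mathbb{N}[X]$, an element $w \in P$ and $n \in \mathbb{N}_{>0}$ such that $q(r) \leq \varepsilon n$ and $(1 + w)\,(n\,a + q(v)) \in P$.
   Context: $\mathbb{N}_{>0}$ denotes the positive integers; $q(v)$ denotes evaluation of $q$ at $v$ in $R$ and $q(r)$ evaluation at the real number $r$. *)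

theory Defs
  imports Complex_Main "HOL-Computational_Algebra.Polynomial"
begin

definition ring_hom_real :: "('a::comm_ring_1 \<Rightarrow> real) \<Rightarrow> bool" where
  "ring_hom_real f \<longleftrightarrow>
     (\<forall>x y. f (x + y) = f x + f y) \<and> (\<forall>x y. f (x * y) = f x * f y) \<and> f 1 = 1"

definition eval_nat_poly :: "nat poly \<Rightarrow> 'a::comm_semiring_1 \<Rightarrow> 'a" where
  "eval_nat_poly p x = poly (map_poly of_nat p) x"

end

theory Submission
  imports Defs
begin

lemma enp_pCons: "eval_nat_poly (pCons a p) x = of_nat a + x * eval_nat_poly p x"
  by (simp add: eval_nat_poly_def map_poly_pCons)

lemma enp_0 [simp]: "eval_nat_poly 0 x = 0"
  by (simp add: eval_nat_poly_def)

lemma enp_add: "eval_nat_poly (p + q) x = eval_nat_poly p x + eval_nat_poly q x"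
  by (induction p q rule: poly_induct2) (simp_all add: enp_pCons algebra_simps)

lemma enp_smult: "eval_nat_poly (smult c p) x = of_nat c * eval_nat_poly p x"
  by (induction p) (simp_all add: enp_pCons algebra_simps)

lemma enp_mult: "eval_nat_poly (p * q) x = eval_nat_poly p x * eval_nat_poly q x"
proof (induction p)
  case 0
  then show ?case by simp
next
  case (pCons a p)
  have "eval_nat_poly (pCons 0 (p * q)) x = x * eval_nat_poly (p*q) x"
    using enp_pCons[of 0 "p*q" x] by simp
  then show ?case using pCons by (simp add: enp_pCons enp_add enp_smult algebra_simps)
qed

lemma enp_const: "eval_nat_poly [:c:] x = of_nat c"
  using enp_pCons[of c 0 x] by simp

lemma enp_monom: "eval_nat_poly (monom 1 k) x = x ^ k"
  by (simp add: eval_nat_poly_def map_poly_monom poly_monom)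

lemma enp_of_nat: "eval_nat_poly p (of_nat m :: 'a::comm_semiring_1) = of_nat (poly p m)"
  by (induction p) (simp_all add: enp_pCons)

lemma enp_real_nonneg: "(r::real) \<ge> 0 \<Longrightarrow> eval_nat_poly p r \<ge> 0"
  by (induction p) (simp_all add: enp_pCons)

lemma hom_0: "ring_hom_real f \<Longrightarrow> f 0 = 0"
  unfolding ring_hom_real_def by (metis add_0 add_cancel_right_right)

lemma hom_of_nat: "ring_hom_real f \<Longrightarrow> f (of_nat n) = of_nat n"
  by (induction n) (auto simp: hom_0 ring_hom_real_def)

lemma hom_enp: "ring_hom_real f \<Longrightarrow> f (eval_nat_poly p x) = eval_nat_poly p (f x)"
  by (induction p) (auto simp: enp_pCons hom_0 hom_of_nat ring_hom_real_def)

lemma hom_diff: "ring_hom_real f \<Longrightarrow> f (x - y) = f x - f y"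
  unfolding ring_hom_real_def by (metis add_diff_cancel_right' diff_add_cancel eq_diff_eq)

definition semiring_set :: "'a::comm_ring_1 set \<Rightarrow> bool" where
  "semiring_set S \<longleftrightarrow> 0 \<in> S \<and> 1 \<in> S \<and> (\<forall>x\<in>S. \<forall>y\<in>S. x + y \<in> S) \<and> (\<forall>x\<in>S. \<forall>y\<in>S. x * y \<in> S)"

definition archi :: "'a::comm_ring_1 set \<Rightarrow> bool" where
  "archi S \<longleftrightarrow> (\<forall>x. \<exists>N::nat. of_nat N - x \<in> S)"

lemma of_nat_in: "semiring_set S \<Longrightarrow> of_nat n \<in> S"
  by (induction n) (auto simp: semiring_set_def)

lemma enp_in: "semiring_set S \<Longrightarrow> v \<in> S \<Longrightarrow> eval_nat_poly p v \<in> S"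
  by (induction p) (auto simp: enp_pCons semiring_set_def of_nat_in)

lemma stepB:
  fixes S :: "'a::comm_ring_1 set"
  assumes sr: "semiring_set S" and ar: "archi S" and t: "t \<in> S" and m: "m \<in> S"
    and tb: "t * b = 1 + m"
  shows "\<exists>K::nat. K > 0 \<and> of_nat K * b \<in> S"
proof -
  have add: "\<And>x y. x \<in> S \<Longrightarrow> y \<in> S \<Longrightarrow> x + y \<in> S"
    and mul: "\<And>x y. x \<in> S \<Longrightarrow> y \<in> S \<Longrightarrow> x * y \<in> S" using sr by (auto simp: semiring_set_def)
  obtain k0 where k0: "of_nat k0 - t \<in> S" using ar by (auto simp: archi_def)
  define k where "k = Suc k0"
  have k: "of_nat k - t \<in> S" using add[OF k0, of 1] sr by (simp add: k_def semiring_set_def algebra_simps)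
  have kpos: "k > 0" by (simp add: k_def)
  obtain c where c: "of_nat c - (- b) \<in> S" using ar unfolding archi_def by blast
  have key: "of_nat (k*L) * b + of_int (e * int k - int L) \<in> S"
    if "e \<ge> 0" "of_nat L * b + of_int e \<in> S" for L :: nat and e :: int
  proof -
    have eq: "of_nat (k*L) * b + of_int (e * int k - int L) =
       of_nat L * m + (of_nat k - t) * (of_nat L * b + of_int e) + of_nat (nat e) * t"
    proof -
      have "of_nat (nat e) = (of_int e :: 'a)" using that(1) by simp
      moreover have "of_nat L * (t * b) = of_nat L * (1 + m)" using tb by simp
      ultimately show ?thesis by (simp add: algebra_simps)
    qed
    show ?thesis unfolding eq
      by (intro add mul that(2) m k t of_nat_in[OF sr])
  qed
  have main: "\<forall>L e. L > 0 \<and> of_nat L * b + of_int e \<in> S \<and> int k * e \<le> int j * int L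
      \<longrightarrow> (\<exists>K::nat. K > 0 \<and> of_nat K * b \<in> S)" for j :: nat
  proof (induction j)
    case 0
    show ?case
    proof (intro allI impI)
      fix L :: nat and e :: int
      assume h: "L > 0 \<and> of_nat L * b + of_int e \<in> S \<and> int k * e \<le> int 0 * int L"
      then have "e \<le> 0" using kpos by (simp add: mult_le_0_iff)
      then have "of_nat L * b = (of_nat L * b + of_int e) + of_nat (nat (- e))" by simp
      also have "\<dots> \<in> S" using h add of_nat_in[OF sr] by blast
      finally show "\<exists>K::nat. K > 0 \<and> of_nat K * b \<in> S" using h by blast
    qed
  next
    case (Suc j)
    show ?case
    proof (intro allI impI)
      fix L :: nat and e :: int
      assume h: "L > 0 \<and> of_nat L * b + of_int e \<in> S \<and> int k * e \<le> int (Suc j) * int L"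
      show "\<exists>K::nat. K > 0 \<and> of_nat K * b \<in> S"
      proof (cases "e \<le> 0")
        case True
        then have "of_nat L * b = (of_nat L * b + of_int e) + of_nat (nat (- e))" by simp
        also have "\<dots> \<in> S" using h add of_nat_in[OF sr] by blast
        finally show ?thesis using h by blast
      next
        case False
        have s1: "of_nat (k*L) * b + of_int (e * int k - int L) \<in> S" using key False h by simp
        have "int k * (e * int k - int L) = int k * (int k * e) - int k * int L" by (simp add: algebra_simps)
        also have "\<dots> \<le> int k * (int (Suc j) * int L) - int k * int L"
          using h by (simp add: mult_left_mono)
        also have "\<dots> = int j * int (k * L)" by (simp add: algebra_simps)
        finally have "int k * (e * int k - int L) \<le> int j * int (k * L)" .
        moreover have "k * L > 0" using h kpos by simp
        ultimately show ?thesis using Suc.IH s1 by blast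
      qed
    qed
  qed
  have "of_nat 1 * b + of_int (int c) \<in> S" using c by (simp add: algebra_simps)
  moreover have "int k * int c \<le> int (k*c) * int 1" by simp
  ultimately show ?thesis using main[of "k*c"] by blast
qed

lemma exists_N:
  fixes S :: "'a::comm_ring_1 set"
  assumes sr: "semiring_set S" and ar: "archi S"
    and nocert: "\<not> (\<exists>t\<in>S. \<exists>m\<in>S. t * b = 1 + m)"
  shows "\<exists>N. S \<subseteq> N \<and> - b \<in> N \<and> (\<forall>x\<in>N. \<forall>y\<in>N. x + y \<in> N) \<and> (\<forall>s\<in>S. \<forall>x\<in>N. s * x \<in> N)
     \<and> - 1 \<notin> N \<and> (\<forall>x. x \<in> N \<or> - x \<in> N)"
proof -
  have add: "\<And>x y. x \<in> S \<Longrightarrow> y \<in> S \<Longrightarrow> x + y \<in> S"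
    and mul: "\<And>x y. x \<in> S \<Longrightarrow> y \<in> S \<Longrightarrow> x * y \<in> S"
    and S0: "0 \<in> S" and S1: "1 \<in> S" using sr by (auto simp: semiring_set_def)
  define N0 where "N0 = {x. \<exists>s1\<in>S. \<exists>s2\<in>S. x = s1 - s2 * b}"
  define ismod where "ismod N \<longleftrightarrow> (\<forall>x\<in>N. \<forall>y\<in>N. x + y \<in> N) \<and> (\<forall>s\<in>S. \<forall>x\<in>N. s * x \<in> N)" for N
  define A where "A = {N. N0 \<subseteq> N \<and> ismod N \<and> - 1 \<notin> N}"
  have N0A: "N0 \<in> A"
  proof -
    have "ismod N0"
      unfolding ismod_def N0_def
    proof (intro conjI ballI)
      fix x y assume "x \<in> {x. \<exists>s1\<in>S. \<exists>s2\<in>S. x = s1 - s2 * b}" "y \<in> {x. \<exists>s1\<in>S. \<exists>s2\<in>S. x = s1 - s2 * b}"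
      then obtain s1 s2 s1' s2' where "s1 \<in> S" "s2 \<in> S" "s1' \<in> S" "s2' \<in> S"
        "x = s1 - s2 * b" "y = s1' - s2' * b" by blast
      then show "x + y \<in> {x. \<exists>s1\<in>S. \<exists>s2\<in>S. x = s1 - s2 * b}"
        by (intro CollectI bexI[of _ "s1 + s1'"] bexI[of _ "s2 + s2'"]) (auto simp: add algebra_simps)
    next
      fix s x assume "s \<in> S" "x \<in> {x. \<exists>s1\<in>S. \<exists>s2\<in>S. x = s1 - s2 * b}"
      then obtain s1 s2 where "s1 \<in> S" "s2 \<in> S" "x = s1 - s2 * b" by blast
      then show "s * x \<in> {x. \<exists>s1\<in>S. \<exists>s2\<in>S. x = s1 - s2 * b}"
        using \<open>s \<in> S\<close>
        by (intro CollectI bexI[of _ "s * s1"] bexI[of _ "s * s2"]) (auto simp: mul algebra_simps)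
    qed
    moreover have "- 1 \<notin> N0"
    proof
      assume "- 1 \<in> N0"
      then obtain s1 s2 where "s1 \<in> S" "s2 \<in> S" "- 1 = s1 - s2 * b" unfolding N0_def by blast
      then have "s2 * b = 1 + s1" by (simp add: algebra_simps)
      then show False using nocert \<open>s1 \<in> S\<close> \<open>s2 \<in> S\<close> by blast
    qed
    ultimately show ?thesis unfolding A_def by blast
  qed
  have "\<exists>M\<in>A. \<forall>X\<in>A. M \<subseteq> X \<longrightarrow> X = M"
  proof (rule subset_Zorn)
    fix C assume ch: "subset.chain A C"
    show "\<exists>U\<in>A. \<forall>X\<in>C. X \<subseteq> U"
    proof (cases "C = {}")
      case True
      then show ?thesis using N0A by blast
    next
      case False
      have CA: "C \<subseteq> A" and cmp: "\<forall>X\<in>C. \<forall>Y\<in>C. X \<subseteq> Y \<or> Y \<subseteq> X"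
        using ch by (auto simp: subset_chain_def)
      have "\<Union>C \<in> A"
        unfolding A_def
      proof (intro CollectI conjI)
        show "N0 \<subseteq> \<Union>C" using False CA unfolding A_def by blast
        show "- 1 \<notin> \<Union>C" using CA unfolding A_def by blast
        show "ismod (\<Union>C)"
          unfolding ismod_def
        proof (intro conjI ballI)
          fix x y assume "x \<in> \<Union>C" "y \<in> \<Union>C"
          then obtain X Y where XY: "X \<in> C" "Y \<in> C" "x \<in> X" "y \<in> Y" by blast
          show "x + y \<in> \<Union>C"
          proof (cases "X \<subseteq> Y")
            case True
            then have "x + y \<in> Y" using XY CA unfolding A_def ismod_def by blast
            then show ?thesis using XY by blast
          next
            case False
            then have "Y \<subseteq> X" using cmp XY by blast
            then have "x + y \<in> X" using XY CA unfolding A_def ismod_def by blast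
            then show ?thesis using XY by blast
          qed
        next
          fix s x assume "s \<in> S" "x \<in> \<Union>C"
          then obtain X where "X \<in> C" "x \<in> X" by blast
          then have "s * x \<in> X" using \<open>s \<in> S\<close> CA unfolding A_def ismod_def by blast
          then show "s * x \<in> \<Union>C" using \<open>X \<in> C\<close> by blast
        qed
      qed
      then show ?thesis by blast
    qed
  qed
  then obtain N where NA: "N \<in> A" and maxN: "\<And>X. X \<in> A \<Longrightarrow> N \<subseteq> X \<Longrightarrow> X = N" by blast
  have N0N: "N0 \<subseteq> N" and Nadd: "\<And>x y. x \<in> N \<Longrightarrow> y \<in> N \<Longrightarrow> x + y \<in> N"
    and Nmul: "\<And>s x. s \<in> S \<Longrightarrow> x \<in> N \<Longrightarrow> s * x \<in> N" and Nm1: "- 1 \<notin> N"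
    using NA unfolding A_def ismod_def by auto
  have SN: "S \<subseteq> N"
  proof
    fix s assume "s \<in> S"
    then have "s \<in> N0" unfolding N0_def using S0 by (intro CollectI bexI[of _ s] bexI[of _ 0]) auto
    then show "s \<in> N" using N0N by blast
  qed
  have bN: "- b \<in> N"
  proof -
    have "- b \<in> N0" unfolding N0_def using S0 S1 by (intro CollectI bexI[of _ 0] bexI[of _ 1]) auto
    then show ?thesis using N0N by blast
  qed
  have ext: "\<exists>n\<in>N. \<exists>t\<in>S. - 1 = n + t * y" if "y \<notin> N" for y
  proof (rule ccontr)
    assume nex: "\<not> (\<exists>n\<in>N. \<exists>t\<in>S. - 1 = n + t * y)"
    define N' where "N' = {x. \<exists>n\<in>N. \<exists>t\<in>S. x = n + t * y}"
    have NN': "N \<subseteq> N'"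
    proof
      fix x assume "x \<in> N"
      then show "x \<in> N'" unfolding N'_def using S0 by (intro CollectI bexI[of _ x] bexI[of _ 0]) auto
    qed
    have "ismod N'"
      unfolding ismod_def
    proof (intro conjI ballI)
      fix x z assume "x \<in> N'" "z \<in> N'"
      then obtain n t n' t' where "n \<in> N" "t \<in> S" "n' \<in> N" "t' \<in> S" "x = n + t * y" "z = n' + t' * y"
        unfolding N'_def by blast
      then show "x + z \<in> N'" unfolding N'_def
        by (intro CollectI bexI[of _ "n + n'"] bexI[of _ "t + t'"]) (auto simp: Nadd add algebra_simps)
    next
      fix s x assume "s \<in> S" "x \<in> N'"
      then obtain n t where "n \<in> N" "t \<in> S" "x = n + t * y" unfolding N'_def by blast
      moreover have "s * x = s * n + (s * t) * y" using \<open>x = n + t * y\<close> by (simp add: algebra_simps)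
      ultimately show "s * x \<in> N'" unfolding N'_def using \<open>s \<in> S\<close> Nmul mul by blast
    qed
    moreover have "- 1 \<notin> N'" using nex unfolding N'_def by blast
    ultimately have "N' \<in> A" using N0N NN' unfolding A_def by blast
    then have "N' = N" using maxN NN' by blast
    moreover have "y \<in> N'" unfolding N'_def using S0 S1 SN
      by (intro CollectI bexI[of _ 0] bexI[of _ 1]) auto
    ultimately show False using that by blast
  qed
  have tot: "x \<in> N \<or> - x \<in> N" for x
  proof (rule ccontr)
    assume "\<not> (x \<in> N \<or> - x \<in> N)"
    then have "x \<notin> N" "- x \<notin> N" by auto
    obtain n1 t1 where n1: "n1 \<in> N" "t1 \<in> S" "- 1 = n1 + t1 * x" using ext[OF \<open>x \<notin> N\<close>] by blast
    obtain n2 t2 where n2: "n2 \<in> N" "t2 \<in> S" "- 1 = n2 + t2 * (- x)" using ext[OF \<open>- x \<notin> N\<close>] by blast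
    obtain k1 where k1: "of_nat k1 - x \<in> S" using ar unfolding archi_def by blast
    obtain k2 where k2: "of_nat k2 - (- x) \<in> S" using ar unfolding archi_def by blast
    define k where "k = k1 + k2"
    have kx1: "of_nat k - x \<in> S"
    proof -
      have "of_nat k - x = (of_nat k1 - x) + of_nat k2" by (simp add: k_def)
      then show ?thesis using add[OF k1 of_nat_in[OF sr], of k2] by (simp add: algebra_simps)
    qed
    have kx2: "of_nat k + x \<in> S"
    proof -
      have "of_nat k + x = (of_nat k2 - (- x)) + of_nat k1" by (simp add: k_def)
      then show ?thesis using add[OF k2 of_nat_in[OF sr], of k1] by (simp add: algebra_simps)
    qed
    have e1: "of_nat k * t1 - 1 \<in> N"
    proof -
      have "n1 + t1 * (of_nat k + x) = (n1 + t1 * x) + of_nat k * t1" by (simp add: algebra_simps)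
      moreover have "n1 + t1 * x = - 1" using n1(3) by (rule sym)
      ultimately have "of_nat k * t1 - 1 = n1 + t1 * (of_nat k + x)" by simp
      then show ?thesis using Nadd[OF n1(1)] SN mul[OF n1(2) kx2] by auto
    qed
    have e2: "of_nat k * t2 - 1 \<in> N"
    proof -
      have "n2 + t2 * (of_nat k - x) = (n2 + t2 * (- x)) + of_nat k * t2" by (simp add: algebra_simps)
      moreover have "n2 + t2 * (- x) = - 1" using n2(3) by (rule sym)
      ultimately have "of_nat k * t2 - 1 = n2 + t2 * (of_nat k - x)" by simp
      then show ?thesis using Nadd[OF n2(1)] SN mul[OF n2(2) kx1] by auto
    qed
    have e3: "- (t1 + t2) \<in> N"
    proof -
      have "- (t1 + t2) = t2 * n1 + t1 * n2"
      proof -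
        have h1: "n1 = - 1 - t1 * x" using n1(3) by (simp add: eq_diff_eq)
        have h2: "n2 = - 1 + t2 * x" using n2(3) by (simp add: eq_diff_eq)
        show ?thesis unfolding h1 h2 by (simp add: algebra_simps)
      qed
      then show ?thesis using Nadd[OF Nmul[OF n2(2) n1(1)] Nmul[OF n1(2) n2(1)]] by simp
    qed
    have "- 1 = of_nat k * (- (t1 + t2)) + (of_nat k * t1 - 1) + (of_nat k * t2 - 1) + 1"
      by (simp add: algebra_simps)
    also have "\<dots> \<in> N"
      by (intro Nadd Nmul[OF of_nat_in[OF sr] e3] e1 e2) (use SN S1 in blast)
    finally show False using Nm1 by blast
  qed
  show ?thesis
    apply (rule exI[of _ N])
    apply (intro conjI ballI allI)
    using SN bN Nadd Nmul Nm1 tot by auto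
qed

lemma dense_rat:
  fixes a c :: real
  assumes "a < c"
  shows "\<exists>p q. q > (0::int) \<and> a < of_int p / of_int q \<and> of_int p / of_int q < c"
proof -
  obtain r where r: "r \<in> \<rat>" "a < r" "r < c" using Rats_dense_in_real[OF assms] by blast
  obtain p q where "q > 0" "r = of_int p / of_int q" using Rats_cases'[OF r(1)] by metis
  then show ?thesis using r by blast
qed

lemma dense_le:
  fixes a c :: real
  assumes "\<And>p q. q > (0::int) \<Longrightarrow> of_int p / of_int q < a \<Longrightarrow> of_int p / of_int q \<le> c"
  shows "a \<le> c"
proof (rule ccontr)
  assume "\<not> a \<le> c"
  then obtain p q where "q > (0::int)" "c < of_int p / of_int q" "of_int p / of_int q < a"
    using dense_rat[of c a] by auto
  then show False using assms by force
qed

lemma dense_ge: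
  fixes a c :: real
  assumes "\<And>p q. q > (0::int) \<Longrightarrow> a < of_int p / of_int q \<Longrightarrow> c \<le> of_int p / of_int q"
  shows "c \<le> a"
proof (rule ccontr)
  assume "\<not> c \<le> a"
  then obtain p q where "q > (0::int)" "a < of_int p / of_int q" "of_int p / of_int q < c"
    using dense_rat[of a c] by auto
  then show False using assms by force
qed

locale charN =
  fixes S N :: "'a::comm_ring_1 set"
  assumes sr: "semiring_set S" and ar: "archi S" and SN: "S \<subseteq> N"
    and Nadd: "\<And>x y. x \<in> N \<Longrightarrow> y \<in> N \<Longrightarrow> x + y \<in> N"
    and Nmul: "\<And>s x. s \<in> S \<Longrightarrow> x \<in> N \<Longrightarrow> s * x \<in> N"
    and Nm1: "- 1 \<notin> N"
    and tot: "\<And>x. x \<in> N \<or> - x \<in> N"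
begin

lemma Sadd: "x \<in> S \<Longrightarrow> y \<in> S \<Longrightarrow> x + y \<in> S"
  and Smul: "x \<in> S \<Longrightarrow> y \<in> S \<Longrightarrow> x * y \<in> S"
  using sr by (auto simp: semiring_set_def)

lemma ofint_S: "q \<ge> 0 \<Longrightarrow> (of_int q :: 'a) \<in> S"
proof -
  assume "q \<ge> 0"
  then have "(of_int q :: 'a) = of_nat (nat q)" by simp
  then show ?thesis using of_nat_in[OF sr] by simp
qed

lemma Nint: "(of_int z :: 'a) \<in> N \<Longrightarrow> z \<ge> 0"
proof (rule ccontr)
  assume h: "of_int z \<in> N" "\<not> z \<ge> 0"
  then have "(- 1 :: 'a) = of_int z + of_int (- z - 1)" by simp
  also have "\<dots> \<in> N" using h ofint_S[of "- z - 1"] SN by (intro Nadd) auto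
  finally show False using Nm1 by blast
qed

definition Dset :: "'a \<Rightarrow> real set" where
  "Dset x = {of_int p / of_int q | p q. q > 0 \<and> of_int q * x - of_int p \<in> N}"

definition phi :: "'a \<Rightarrow> real" where
  "phi x = Sup (Dset x)"

lemma F3:
  assumes "q > 0" "q' > 0" "of_int q * x - of_int p \<in> N" "of_int p' - of_int q' * x \<in> N"
  shows "(of_int p / of_int q :: real) \<le> of_int p' / of_int q'"
proof -
  have "of_int q' * (of_int q * x - of_int p) + of_int q * (of_int p' - of_int q' * x)
      = (of_int (q * p' - q' * p) :: 'a)" by (simp add: algebra_simps)
  moreover have "of_int q' * (of_int q * x - of_int p) + of_int q * (of_int p' - of_int q' * x) \<in> N"
    using assms ofint_S[of q] ofint_S[of q'] by (intro Nadd Nmul) auto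
  ultimately have "(of_int (q * p' - q' * p) :: 'a) \<in> N" by simp
  then have "q' * p \<le> q * p'" using Nint by fastforce
  then have "(of_int p * of_int q' :: real) \<le> of_int p' * of_int q"
    by (metis mult.commute of_int_le_iff of_int_mult)
  then show ?thesis using assms(1,2) by (simp add: divide_simps)
qed

lemma D_bdd: "bdd_above (Dset x)"
proof -
  obtain k where k: "of_nat k - x \<in> S" using ar unfolding archi_def by blast
  have "of_int (int k) - of_int 1 * x \<in> N" using k SN by auto
  then have "d \<le> of_int (int k) / of_int 1" if "d \<in> Dset x" for d
    using that F3[of _ 1 x _ "int k"] unfolding Dset_def by auto
  then show ?thesis unfolding bdd_above_def by blast
qed

lemma D_ne: "Dset x \<noteq> {}"
proof -
  obtain k where k: "of_nat k - (- x) \<in> S" using ar unfolding archi_def by blast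
  have "of_int 1 * x - of_int (- int k) \<in> N" using k SN by (auto simp: algebra_simps)
  then have "of_int (- int k) / of_int 1 \<in> Dset x" unfolding Dset_def
    by (intro CollectI exI[of _ "- int k"] exI[of _ 1]) simp
  then show ?thesis by blast
qed

lemma phi_lower: "q > 0 \<Longrightarrow> of_int q * x - of_int p \<in> N \<Longrightarrow> of_int p / of_int q \<le> phi x"
  unfolding phi_def by (rule cSup_upper[OF _ D_bdd]) (auto simp: Dset_def)

lemma phi_upper: "q > 0 \<Longrightarrow> of_int p - of_int q * x \<in> N \<Longrightarrow> phi x \<le> of_int p / of_int q"
  unfolding phi_def
  by (rule cSup_least[OF D_ne]) (auto simp: Dset_def intro: F3)

lemma phi_iii: "q > 0 \<Longrightarrow> of_int p / of_int q < phi x \<Longrightarrow> of_int q * x - of_int p \<in> N"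
  using tot[of "of_int q * x - of_int p"] phi_upper[of q p x] by force

lemma phi_iv: "q > 0 \<Longrightarrow> phi x < of_int p / of_int q \<Longrightarrow> of_int p - of_int q * x \<in> N"
  using tot[of "of_int p - of_int q * x"] phi_lower[of q x p] by force

lemma phi_nonneg: "y \<in> N \<Longrightarrow> 0 \<le> phi y"
  using phi_lower[of 1 y 0] by simp

lemma phi_1: "phi 1 = 1"
proof -
  have "0 \<in> N" using SN sr by (auto simp: semiring_set_def)
  then show ?thesis using phi_lower[of 1 1 1] phi_upper[of 1 1 1] by simp
qed

lemma phi_add: "phi (x + y) = phi x + phi y"
proof (rule antisym)
  have "of_int p / of_int q \<le> phi (x + y) - phi y" if a: "q > 0" "of_int p / of_int q < phi x" for p q
  proof -
    have "phi y \<le> phi (x + y) - of_int p / of_int q"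
    proof (rule dense_le)
      fix p' q' :: int assume b: "q' > 0" "of_int p' / of_int q' < phi y"
      have "of_int (q * q') * (x + y) - of_int (q' * p + q * p') =
        of_int q' * (of_int q * x - of_int p) + of_int q * (of_int q' * y - of_int p')"
        by (simp add: algebra_simps)
      also have "\<dots> \<in> N" using phi_iii[OF a] phi_iii[OF b] ofint_S[of q] ofint_S[of q'] a b
        by (intro Nadd Nmul) auto
      finally have "of_int (q' * p + q * p') / of_int (q * q') \<le> phi (x + y)"
        using a b by (intro phi_lower) auto
      moreover have "(of_int (q' * p + q * p') / of_int (q * q') :: real)
          = of_int p / of_int q + of_int p' / of_int q'"
        using a b by (simp add: field_simps)
      ultimately show "of_int p' / of_int q' \<le> phi (x + y) - of_int p / of_int q" by simp
    qed
    then show ?thesis by simp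
  qed
  then have "phi x \<le> phi (x + y) - phi y" by (rule dense_le)
  then show "phi x + phi y \<le> phi (x + y)" by simp
next
  have "phi (x + y) - phi y \<le> of_int p / of_int q" if a: "q > 0" "phi x < of_int p / of_int q" for p q
  proof -
    have "phi (x + y) - of_int p / of_int q \<le> phi y"
    proof (rule dense_ge)
      fix p' q' :: int assume b: "q' > 0" "phi y < of_int p' / of_int q'"
      have "of_int (q' * p + q * p') - of_int (q * q') * (x + y) =
        of_int q' * (of_int p - of_int q * x) + of_int q * (of_int p' - of_int q' * y)"
        by (simp add: algebra_simps)
      also have "\<dots> \<in> N" using phi_iv[OF a] phi_iv[OF b] ofint_S[of q] ofint_S[of q'] a b
        by (intro Nadd Nmul) auto
      finally have "phi (x + y) \<le> of_int (q' * p + q * p') / of_int (q * q')"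
        using a b by (intro phi_upper) auto
      moreover have "(of_int (q' * p + q * p') / of_int (q * q') :: real)
          = of_int p / of_int q + of_int p' / of_int q'"
        using a b by (simp add: field_simps)
      ultimately show "phi (x + y) - of_int p / of_int q \<le> of_int p' / of_int q'" by simp
    qed
    then show ?thesis by simp
  qed
  then have "phi (x + y) - phi y \<le> phi x" by (rule dense_ge)
  then show "phi (x + y) \<le> phi x + phi y" by simp
qed

lemma phi_0: "phi 0 = 0"
  using phi_add[of 0 0] by simp

lemma phi_neg: "phi (- x) = - phi x"
  using phi_add[of x "- x"] phi_0 by simp

lemma phi_diff: "phi (x - y) = phi x - phi y"
  using phi_add[of x "- y"] phi_neg[of y] by simp

lemma phi_of_nat_mult: "phi (of_nat n * x) = of_nat n * phi x"
  by (induction n) (simp_all add: phi_0 phi_add algebra_simps)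

lemma phi_of_int_mult: "phi (of_int z * x) = of_int z * phi x"
proof (cases z rule: int_cases)
  case (nonneg n)
  then show ?thesis using phi_of_nat_mult[of n x] by simp
next
  case (neg n)
  then show ?thesis using phi_of_nat_mult[of "Suc n" x] phi_neg[of "of_nat (Suc n) * x"]
    by (simp del: of_nat_Suc)
qed

lemma phi_of_nat: "phi (of_nat n) = of_nat n"
  using phi_of_nat_mult[of n 1] phi_1 by simp

lemma phi_mult_S:
  assumes s: "s \<in> S"
  shows "phi (s * y) = phi s * phi y"
proof -
  have ps: "0 \<le> phi s" using s SN phi_nonneg by blast
  have lo: "of_int p / of_int q * phi s \<le> phi (s * y)" if a: "q > 0" "of_int p / of_int q < phi y" for p q
  proof -
    have "s * (of_int q * y - of_int p) \<in> N" using phi_iii[OF a] s by (intro Nmul)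
    then have "0 \<le> phi (s * (of_int q * y - of_int p))" by (rule phi_nonneg)
    moreover have "s * (of_int q * y - of_int p) = of_int q * (s * y) - of_int p * s"
      by (simp add: algebra_simps)
    ultimately have "of_int p * phi s \<le> of_int q * phi (s * y)"
      by (simp add: phi_diff phi_of_int_mult)
    then show ?thesis using a(1) by (simp add: field_simps)
  qed
  have up: "phi (s * y) \<le> of_int p / of_int q * phi s" if a: "q > 0" "phi y < of_int p / of_int q" for p q
  proof -
    have "s * (of_int p - of_int q * y) \<in> N" using phi_iv[OF a] s by (intro Nmul)
    then have "0 \<le> phi (s * (of_int p - of_int q * y))" by (rule phi_nonneg)
    moreover have "s * (of_int p - of_int q * y) = of_int p * s - of_int q * (s * y)"
      by (simp add: algebra_simps)
    ultimately have "of_int q * phi (s * y) \<le> of_int p * phi s"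
      by (simp add: phi_diff phi_of_int_mult)
    then show ?thesis using a(1) by (simp add: field_simps)
  qed
  show ?thesis
  proof (cases "phi s = 0")
    case True
    obtain p q where pq: "q > (0::int)" "phi y - 1 < of_int p / of_int q" "of_int p / of_int q < phi y"
      using dense_rat[of "phi y - 1" "phi y"] by auto
    obtain p' q' where pq': "q' > (0::int)" "phi y < of_int p' / of_int q'" "of_int p' / of_int q' < phi y + 1"
      using dense_rat[of "phi y" "phi y + 1"] by auto
    show ?thesis using lo[OF pq(1,3)] up[OF pq'(1,2)] True by simp
  next
    case False
    then have sp: "phi s > 0" using ps by simp
    have "phi y \<le> phi (s * y) / phi s"
      by (rule dense_le) (use lo sp in \<open>simp add: field_simps\<close>)
    moreover have "phi (s * y) / phi s \<le> phi y"
      by (rule dense_ge) (use up sp in \<open>simp add: field_simps\<close>)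
    ultimately show ?thesis using sp by (simp add: field_simps)
  qed
qed

lemma phi_mult: "phi (x * y) = phi x * phi y"
proof -
  obtain k where k: "of_nat k - (- x) \<in> S" using ar unfolding archi_def by blast
  have xk: "x + of_nat k \<in> S" using k by (simp add: algebra_simps)
  have "x * y = (x + of_nat k) * y - of_nat k * y" by (simp add: algebra_simps)
  then have "phi (x * y) = phi (x + of_nat k) * phi y - of_nat k * phi y"
    using phi_mult_S[OF xk] phi_diff phi_of_nat_mult by simp
  then show ?thesis by (simp add: phi_add phi_of_nat algebra_simps)
qed

lemma phi_hom: "ring_hom_real phi"
  unfolding ring_hom_real_def using phi_add phi_mult phi_1 by blast

end

lemma krivine:
  fixes S :: "'a::comm_ring_1 set"
  assumes sr: "semiring_set S" and ar: "archi S"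
    and nocert: "\<not> (\<exists>t\<in>S. \<exists>m\<in>S. t * b = 1 + m)"
  shows "\<exists>f. ring_hom_real f \<and> (\<forall>x\<in>S. f x \<ge> 0) \<and> f b \<le> 0"
proof -
  obtain N where N: "S \<subseteq> N" "- b \<in> N" "\<forall>x\<in>N. \<forall>y\<in>N. x + y \<in> N" "\<forall>s\<in>S. \<forall>x\<in>N. s * x \<in> N"
     "- 1 \<notin> N" "\<forall>x. x \<in> N \<or> - x \<in> N"
    using exists_N[OF sr ar nocert] by blast
  interpret charN S N using N sr ar by unfold_locales auto
  have "phi b \<le> 0" using phi_nonneg[OF N(2)] phi_neg by simp
  then show ?thesis using phi_hom phi_nonneg N(1) by blast
qed

lemma core:
  fixes S :: "'a::comm_ring_1 set"
  assumes sr: "semiring_set S" and ar: "archi S"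
    and pos: "\<And>f. ring_hom_real f \<Longrightarrow> (\<forall>x\<in>S. f x \<ge> 0) \<Longrightarrow> f b > 0"
  shows "\<exists>K::nat. K > 0 \<and> of_nat K * b \<in> S"
proof -
  have "\<exists>t\<in>S. \<exists>m\<in>S. t * b = 1 + m"
    using krivine[OF sr ar, of b] pos by force
  then show ?thesis using stepB[OF sr ar] by blast
qed

locale ctx =
  fixes P :: "'a::comm_ring_1 set" and v :: 'a and r :: real
  assumes add_closed: "\<And>x y. x \<in> P \<Longrightarrow> y \<in> P \<Longrightarrow> x + y \<in> P"
    and mult_closed: "\<And>x y. x \<in> P \<Longrightarrow> y \<in> P \<Longrightarrow> x * y \<in> P"
    and zero_in: "0 \<in> P" and one_in: "1 \<in> P"
    and v_in: "v \<in> P"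
    and arch: "\<And>b. \<exists>p :: nat poly. eval_nat_poly p v - b \<in> P"
    and r_nn: "r \<ge> 0"
begin

lemma P_sr: "semiring_set P"
  unfolding semiring_set_def using add_closed mult_closed zero_in one_in by blast

lemma nat_P: "of_nat n \<in> P"
  by (rule of_nat_in[OF P_sr])

lemma enp_P: "eval_nat_poly p v \<in> P"
  by (rule enp_in[OF P_sr v_in])

definition Mset :: "'a set" where
  "Mset = {x. \<forall>\<delta>>0. \<exists>q w n. w \<in> P \<and> n > 0 \<and> eval_nat_poly q r \<le> \<delta> * real n \<and>
      (1 + w) * (of_nat n * x + eval_nat_poly q v) \<in> P}"

lemma P_M:
  assumes "x \<in> P" shows "x \<in> Mset"
  unfolding Mset_def
proof (intro CollectI allI impI)
  fix \<delta> :: real assume "\<delta> > 0"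
  then have "eval_nat_poly 0 r \<le> \<delta> * real (1::nat) \<and> (1 + 0) * (of_nat 1 * x + eval_nat_poly 0 v) \<in> P"
    using assms by simp
  then show "\<exists>q w n. w \<in> P \<and> n > 0 \<and> eval_nat_poly q r \<le> \<delta> * real n \<and>
      (1 + w) * (of_nat n * x + eval_nat_poly q v) \<in> P"
    using zero_in by blast
qed

lemma M_cert:
  assumes "x \<in> Mset" "\<delta> > 0"
  shows "\<exists>q w n. w \<in> P \<and> n > 0 \<and> eval_nat_poly q r \<le> \<delta> * real n \<and>
      (1 + w) * (of_nat n * x + eval_nat_poly q v) \<in> P"
  using assms unfolding Mset_def by blast

lemma M_add:
  assumes x: "x \<in> Mset" and y: "y \<in> Mset"
  shows "x + y \<in> Mset"
  unfolding Mset_def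
proof (intro CollectI allI impI)
  fix \<delta> :: real assume d: "\<delta> > 0"
  obtain q1 w1 n1 where c1: "w1 \<in> P" "n1 > 0" "eval_nat_poly q1 r \<le> \<delta>/2 * real n1"
      "(1 + w1) * (of_nat n1 * x + eval_nat_poly q1 v) \<in> P"
    using M_cert[OF x, of "\<delta>/2"] d by auto
  obtain q2 w2 n2 where c2: "w2 \<in> P" "n2 > 0" "eval_nat_poly q2 r \<le> \<delta>/2 * real n2"
      "(1 + w2) * (of_nat n2 * y + eval_nat_poly q2 v) \<in> P"
    using M_cert[OF y, of "\<delta>/2"] d by auto
  define q where "q = smult n2 q1 + smult n1 q2"
  define w where "w = w1 + w2 + w1 * w2"
  have wP: "w \<in> P" unfolding w_def
    by (rule add_closed[OF add_closed[OF c1(1) c2(1)] mult_closed[OF c1(1) c2(1)]])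
  have "(1 + w) * (of_nat (n1 * n2) * (x + y) + eval_nat_poly q v) =
     of_nat n2 * (1 + w2) * ((1 + w1) * (of_nat n1 * x + eval_nat_poly q1 v)) +
     of_nat n1 * (1 + w1) * ((1 + w2) * (of_nat n2 * y + eval_nat_poly q2 v))"
    unfolding q_def w_def by (simp add: enp_add enp_smult algebra_simps)
  also have "\<dots> \<in> P"
    by (rule add_closed[OF mult_closed[OF mult_closed[OF nat_P add_closed[OF one_in c2(1)]] c1(4)]
                           mult_closed[OF mult_closed[OF nat_P add_closed[OF one_in c1(1)]] c2(4)]])
  finally have mem: "(1 + w) * (of_nat (n1 * n2) * (x + y) + eval_nat_poly q v) \<in> P" .
  have "eval_nat_poly q r = real n2 * eval_nat_poly q1 r + real n1 * eval_nat_poly q2 r"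
    unfolding q_def by (simp add: enp_add enp_smult)
  also have "\<dots> \<le> real n2 * (\<delta>/2 * real n1) + real n1 * (\<delta>/2 * real n2)"
    using c1(3) c2(3) by (intro add_mono mult_left_mono) auto
  also have "\<dots> = \<delta> * real (n1 * n2)" by (simp add: algebra_simps)
  finally have bd: "eval_nat_poly q r \<le> \<delta> * real (n1 * n2)" .
  show "\<exists>q w n. w \<in> P \<and> n > 0 \<and> eval_nat_poly q r \<le> \<delta> * real n \<and>
      (1 + w) * (of_nat n * (x + y) + eval_nat_poly q v) \<in> P"
    apply (rule exI[of _ q], rule exI[of _ w], rule exI[of _ "n1 * n2"])
    apply (intro conjI wP bd mem)
    using c1(2) c2(2) by simp
qed

lemma M_mult:
  assumes x: "x \<in> Mset" and y: "y \<in> Mset"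
  shows "x * y \<in> Mset"
  unfolding Mset_def
proof (intro CollectI allI impI)
  fix \<delta> :: real assume d: "\<delta> > 0"
  obtain px where px: "eval_nat_poly px v - x \<in> P" using arch by blast
  obtain py where py: "eval_nat_poly py v - y \<in> P" using arch by blast
  define A where "A = eval_nat_poly px r"
  define B where "B = eval_nat_poly py r"
  have A0: "A \<ge> 0" and B0: "B \<ge> 0" unfolding A_def B_def using enp_real_nonneg r_nn by auto
  define \<eta> where "\<eta> = min 1 (\<delta> / (A + B + 1))"
  have eta0: "\<eta> > 0" unfolding \<eta>_def using d A0 B0 by simp
  have eta1: "\<eta> \<le> 1" unfolding \<eta>_def by simp
  have eta2: "\<eta> * (A + B + 1) \<le> \<delta>"
  proof -
    have "\<eta> \<le> \<delta> / (A + B + 1)" unfolding \<eta>_def by simp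
    then show ?thesis using A0 B0 by (simp add: field_simps)
  qed
  obtain q1 w1 n1 where c1: "w1 \<in> P" "n1 > 0" "eval_nat_poly q1 r \<le> \<eta> * real n1"
      "(1 + w1) * (of_nat n1 * x + eval_nat_poly q1 v) \<in> P"
    using M_cert[OF x eta0] by auto
  obtain q2 w2 n2 where c2: "w2 \<in> P" "n2 > 0" "eval_nat_poly q2 r \<le> \<eta> * real n2"
      "(1 + w2) * (of_nat n2 * y + eval_nat_poly q2 v) \<in> P"
    using M_cert[OF y eta0] by auto
  define q where "q = smult n1 (q2 * px) + smult n2 (q1 * py) + q1 * q2"
  define w where "w = w1 + w2 + w1 * w2"
  have wP: "w \<in> P" unfolding w_def
    by (rule add_closed[OF add_closed[OF c1(1) c2(1)] mult_closed[OF c1(1) c2(1)]])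
  define Q1 where "Q1 = eval_nat_poly q1 v"
  define Q2 where "Q2 = eval_nat_poly q2 v"
  define PX where "PX = eval_nat_poly px v"
  define PY where "PY = eval_nat_poly py v"
  have "(1 + w) * (of_nat (n1 * n2) * (x * y) + eval_nat_poly q v) =
     ((1 + w1) * (of_nat n1 * x + Q1)) * ((1 + w2) * (of_nat n2 * y + Q2)) +
     (1 + w1) * (1 + w2) * (of_nat n1 * Q2 * (PX - x) + of_nat n2 * Q1 * (PY - y))"
    unfolding q_def w_def Q1_def Q2_def PX_def PY_def
    by (simp add: enp_add enp_smult enp_mult algebra_simps)
  also have "\<dots> \<in> P"
    unfolding Q1_def Q2_def PX_def PY_def
    by (rule add_closed[OF mult_closed[OF c1(4) c2(4)]
          mult_closed[OF mult_closed[OF add_closed[OF one_in c1(1)] add_closed[OF one_in c2(1)]]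
            add_closed[OF mult_closed[OF mult_closed[OF nat_P enp_P] px]
                          mult_closed[OF mult_closed[OF nat_P enp_P] py]]]])
  finally have mem: "(1 + w) * (of_nat (n1 * n2) * (x * y) + eval_nat_poly q v) \<in> P" .
  define a1 where "a1 = eval_nat_poly q1 r"
  define a2 where "a2 = eval_nat_poly q2 r"
  have a10: "a1 \<ge> 0" and a20: "a2 \<ge> 0" unfolding a1_def a2_def using enp_real_nonneg r_nn by auto
  have a1b: "a1 \<le> \<eta> * real n1" and a2b: "a2 \<le> \<eta> * real n2" using c1 c2 a1_def a2_def by auto
  have "eval_nat_poly q r = real n1 * (a2 * A) + real n2 * (a1 * B) + a1 * a2"
    unfolding q_def a1_def a2_def A_def B_def by (simp add: enp_add enp_smult enp_mult)
  also have "\<dots> \<le> real n1 * ((\<eta> * real n2) * A) + real n2 * ((\<eta> * real n1) * B) + (\<eta> * real n1) * (\<eta> * real n2)"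
    using a1b a2b a10 a20 A0 B0 eta0
    by (intro add_mono mult_left_mono mult_right_mono mult_mono) auto
  also have "\<dots> = \<eta> * (real n1 * real n2) * (A + B + \<eta>)" by (simp add: algebra_simps)
  also have "\<dots> \<le> \<eta> * (real n1 * real n2) * (A + B + 1)"
    using eta0 eta1 by (intro mult_left_mono) auto
  also have "\<dots> = (\<eta> * (A + B + 1)) * (real n1 * real n2)" by (simp add: algebra_simps)
  also have "\<dots> \<le> \<delta> * (real n1 * real n2)"
    using eta2 by (intro mult_right_mono) auto
  finally have bd: "eval_nat_poly q r \<le> \<delta> * real (n1 * n2)" by simp
  show "\<exists>q w n. w \<in> P \<and> n > 0 \<and> eval_nat_poly q r \<le> \<delta> * real n \<and>
      (1 + w) * (of_nat n * (x * y) + eval_nat_poly q v) \<in> P"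
    apply (rule exI[of _ q], rule exI[of _ w], rule exI[of _ "n1 * n2"])
    apply (intro conjI wP bd mem)
    using c1(2) c2(2) by simp
qed

end

lemma enp_monom1: "eval_nat_poly (monom (Suc 0) k) x = x ^ k"
  using enp_monom[of k x] by simp

context ctx
begin

lemma M_sr: "semiring_set Mset"
  unfolding semiring_set_def using P_M zero_in one_in M_add M_mult by blast

lemma telescope: "\<exists>g\<in>P. (of_nat m ^ J + v * g) * (of_nat m - v) = of_nat m ^ Suc J - v ^ Suc J"
proof (induction J)
  case 0
  show ?case using zero_in by (intro bexI[of _ 0]) simp_all
next
  case (Suc J)
  then obtain g where g: "g \<in> P" "(of_nat m ^ J + v * g) * (of_nat m - v) = of_nat m ^ Suc J - v ^ Suc J"
    by blast
  define g' where "g' = of_nat m * g + v ^ J"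
  have g'P: "g' \<in> P" unfolding g'_def
    by (rule add_closed[OF mult_closed[OF nat_P g(1)]]) (rule enp_in[OF P_sr v_in, of "monom 1 J", unfolded enp_monom])
  have "(of_nat m ^ Suc J + v * g') * (of_nat m - v) =
      of_nat m * ((of_nat m ^ J + v * g) * (of_nat m - v)) + v ^ Suc J * (of_nat m - v)"
    unfolding g'_def by (simp add: algebra_simps)
  also have "\<dots> = of_nat m ^ Suc (Suc J) - v ^ Suc (Suc J)"
    unfolding g(2) by (simp add: algebra_simps)
  finally show ?case using g'P by blast
qed

lemma vpow_P: "v ^ k \<in> P"
  using enp_in[OF P_sr v_in, of "monom 1 k"] by (simp add: enp_monom enp_monom1)

lemma m_minus_v:
  assumes m: "real m > r"
  shows "of_nat m - v \<in> Mset"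
  unfolding Mset_def
proof (intro CollectI allI impI)
  fix \<delta> :: real assume d: "\<delta> > 0"
  have m1: "m \<ge> 1" using m r_nn by (cases m) auto
  define \<rho> where "\<rho> = r / real m"
  have rho0: "\<rho> \<ge> 0" and rho1: "\<rho> < 1" unfolding \<rho>_def using m r_nn m1 by (auto simp: field_simps)
  obtain J where J: "\<rho> ^ J < \<delta> / real m" using real_arch_pow_inv[of "\<delta> / real m" \<rho>] d m1 rho1 by auto
  obtain g where g: "g \<in> P" "(of_nat m ^ J + v * g) * (of_nat m - v) = of_nat m ^ Suc J - v ^ Suc J"
    using telescope by blast
  define w where "w = of_nat (m ^ J - 1) + v * g"
  have wP: "w \<in> P" unfolding w_def by (rule add_closed[OF nat_P mult_closed[OF v_in g(1)]])
  have mJ: "m ^ J \<ge> 1" using m1 by simp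
  have w1: "1 + w = of_nat m ^ J + v * g"
  proof -
    have "(1::'a) + of_nat (m ^ J - 1) = of_nat (1 + (m ^ J - 1))" by simp
    also have "1 + (m ^ J - 1) = m ^ J" using mJ by simp
    finally show ?thesis unfolding w_def by (simp add: algebra_simps)
  qed
  define H where "H = of_nat m ^ J + v * g"
  have "(1 + w) * (of_nat (m ^ J) * (of_nat m - v) + eval_nat_poly (monom 1 (Suc J)) v)
      = of_nat m ^ J * (H * (of_nat m - v)) + H * v ^ Suc J"
    unfolding w1 H_def by (simp add: enp_monom enp_monom1 algebra_simps)
  also have "\<dots> = of_nat m ^ J * of_nat m ^ Suc J + g * v ^ Suc (Suc J)"
    unfolding H_def g(2) by (simp add: algebra_simps)
  also have "\<dots> \<in> P"
  proof -
    have "(of_nat m ^ J * of_nat m ^ Suc J :: 'a) = of_nat (m ^ J * m ^ Suc J)" by simp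
    then show ?thesis using add_closed[OF nat_P[of "m ^ J * m ^ Suc J"] mult_closed[OF g(1) vpow_P]]
      by metis
  qed
  finally have mem: "(1 + w) * (of_nat (m ^ J) * (of_nat m - v) + eval_nat_poly (monom 1 (Suc J)) v) \<in> P" .
  have "eval_nat_poly (monom 1 (Suc J)) r = r ^ Suc J" by (simp add: enp_monom enp_monom1)
  also have "\<dots> = \<rho> ^ Suc J * real m ^ Suc J" unfolding \<rho>_def using m1
    by (simp add: power_divide)
  also have "\<dots> \<le> \<rho> ^ J * real m ^ Suc J"
  proof (rule mult_right_mono)
    show "\<rho> ^ Suc J \<le> \<rho> ^ J" using rho0 rho1 by (intro power_decreasing) auto
  qed simp
  also have "\<dots> \<le> (\<delta> / real m) * real m ^ Suc J"
    using J by (intro mult_right_mono) auto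
  also have "\<dots> = \<delta> * real (m ^ J)" using m1 by (simp add: field_simps)
  finally have bd: "eval_nat_poly (monom 1 (Suc J)) r \<le> \<delta> * real (m ^ J)" .
  show "\<exists>q w n. w \<in> P \<and> n > 0 \<and> eval_nat_poly q r \<le> \<delta> * real n \<and>
      (1 + w) * (of_nat n * (of_nat m - v) + eval_nat_poly q v) \<in> P"
    apply (rule exI[of _ "monom 1 (Suc J)"], rule exI[of _ w], rule exI[of _ "m ^ J"])
    apply (intro conjI wP bd mem)
    using m1 by simp
qed

lemma M_archi: "archi Mset"
  unfolding archi_def
proof
  fix x
  define m where "m = nat \<lfloor>r\<rfloor> + 1"
  have m: "real m > r" unfolding m_def using r_nn by linarith
  have mv: "of_nat m - v \<in> Mset" by (rule m_minus_v[OF m])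
  have pb: "of_nat (poly p m) - eval_nat_poly p v \<in> Mset" for p
  proof (induction p)
    case 0
    then show ?case using P_M zero_in by simp
  next
    case (pCons a p)
    have "of_nat (poly (pCons a p) m) - eval_nat_poly (pCons a p) v =
      of_nat (poly p m) * (of_nat m - v) + v * (of_nat (poly p m) - eval_nat_poly p v)"
      by (simp add: enp_pCons algebra_simps)
    also have "\<dots> \<in> Mset"
      by (rule M_add[OF M_mult[OF P_M[OF nat_P] mv] M_mult[OF P_M[OF v_in] pCons(2)]])
    finally show ?case .
  qed
  obtain p where p: "eval_nat_poly p v - x \<in> P" using arch by blast
  have "of_nat (poly p m) - x = (of_nat (poly p m) - eval_nat_poly p v) + (eval_nat_poly p v - x)"
    by simp
  also have "\<dots> \<in> Mset" by (rule M_add[OF pb P_M[OF p]])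
  finally show "\<exists>N. of_nat N - x \<in> Mset" by blast
qed

end

theorem theorem4p4:
  fixes P :: "'a::{comm_ring_1, ring_char_0} set" and v a :: 'a
  assumes add_closed: "\<And>x y. x \<in> P \<Longrightarrow> y \<in> P \<Longrightarrow> x + y \<in> P"
    and mult_closed: "\<And>x y. x \<in> P \<Longrightarrow> y \<in> P \<Longrightarrow> x * y \<in> P"
    and zero_in: "0 \<in> P" and one_in: "1 \<in> P"
    and v_in: "v \<in> P"
    and arch: "\<And>b. \<exists>p :: nat poly. eval_nat_poly p v - b \<in> P"
  shows "(\<forall>f. ring_hom_real f \<and> (\<forall>x\<in>P. f x \<ge> 0) \<longrightarrow> f a \<ge> 0) \<longleftrightarrow>
         (\<forall>r::real. r \<ge> 0 \<longrightarrow> (\<forall>\<epsilon>::real. \<epsilon> > 0 \<longrightarrow>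
            (\<exists>q :: nat poly. \<exists>w\<in>P. \<exists>n::nat. n > 0 \<and>
               eval_nat_poly q r \<le> \<epsilon> * real n \<and>
               (1 + w) * (of_nat n * a + eval_nat_poly q v) \<in> P)))"
proof (intro iffI allI impI)
  fix r :: real and \<epsilon> :: real
  assume H1: "\<forall>f. ring_hom_real f \<and> (\<forall>x\<in>P. f x \<ge> 0) \<longrightarrow> f a \<ge> 0"
    and r: "r \<ge> 0" and e: "\<epsilon> > 0"
  interpret ctx P v r using assms r by unfold_locales auto
  obtain n0 :: nat where n0: "2 / \<epsilon> < real n0" using reals_Archimedean2 by blast
  define n where "n = Suc n0"
  have npos: "n > 0" unfolding n_def by simp
  have en: "1 \<le> \<epsilon> / 2 * real n"
  proof -
    have "2 / \<epsilon> \<le> real n" using n0 unfolding n_def by simp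
    then show ?thesis using e by (simp add: field_simps)
  qed
  define b where "b = of_nat n * a + 1"
  have pos: "f b > 0" if f: "ring_hom_real f" "\<forall>x\<in>Mset. f x \<ge> 0" for f
  proof -
    have "\<forall>x\<in>P. f x \<ge> 0" using f(2) P_M by blast
    then have fa: "f a \<ge> 0" using H1 f(1) by blast
    have "f b = real n * f a + 1" unfolding b_def using f(1) hom_of_nat[OF f(1)]
      unfolding ring_hom_real_def by simp
    moreover have "real n * f a \<ge> 0" using fa by simp
    ultimately show ?thesis by simp
  qed
  have "\<exists>K::nat. K > 0 \<and> of_nat K * b \<in> Mset"
    by (rule core[OF M_sr M_archi]) (rule pos)
  then obtain K :: nat where K: "K > 0" "of_nat K * b \<in> Mset" by blast
  have e2: "\<epsilon> / 2 > 0" using e by simp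
  obtain q w k where c: "w \<in> P" "k > 0" "eval_nat_poly q r \<le> \<epsilon> / 2 * real k"
      "(1 + w) * (of_nat k * (of_nat K * b) + eval_nat_poly q v) \<in> P"
    using M_cert[OF K(2) e2] by auto
  define q' where "q' = q + [:k * K:]"
  have eq: "of_nat (k * K * n) * a + eval_nat_poly q' v = of_nat k * (of_nat K * b) + eval_nat_poly q v"
    unfolding q'_def b_def by (simp add: enp_add enp_const algebra_simps)
  have mem: "(1 + w) * (of_nat (k * K * n) * a + eval_nat_poly q' v) \<in> P"
    using c(4) unfolding eq .
  have "eval_nat_poly q' r = eval_nat_poly q r + real k * real K"
    unfolding q'_def by (simp add: enp_add enp_const)
  also have "\<dots> \<le> \<epsilon> / 2 * real k + real k * real K" using c(3) by simp
  also have "\<dots> \<le> \<epsilon> / 2 * (real k * (real K * real n)) + (real k * real K) * (\<epsilon> / 2 * real n)"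
  proof (rule add_mono)
    have "1 \<le> real K * real n" using K(1) npos
      by (metis One_nat_def Suc_leI mult_le_mono of_nat_1 of_nat_le_iff of_nat_mult nat_mult_1)
    then show "\<epsilon> / 2 * real k \<le> \<epsilon> / 2 * (real k * (real K * real n))"
      using e by (intro mult_left_mono) (auto intro: mult_le_cancel_left1[THEN iffD2])
    show "real k * real K \<le> (real k * real K) * (\<epsilon> / 2 * real n)"
      using mult_left_mono[OF en, of "real k * real K"] by simp
  qed
  also have "\<dots> = \<epsilon> * real (k * K * n)" by (simp add: algebra_simps)
  finally have bd: "eval_nat_poly q' r \<le> \<epsilon> * real (k * K * n)" .
  show "\<exists>q :: nat poly. \<exists>w\<in>P. \<exists>n::nat. n > 0 \<and> eval_nat_poly q r \<le> \<epsilon> * real n \<and>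
               (1 + w) * (of_nat n * a + eval_nat_poly q v) \<in> P"
    apply (rule exI[of _ q'], rule bexI[of _ w], rule exI[of _ "k * K * n"])
    apply (intro conjI bd mem)
    using c(1,2) K(1) npos by simp_all
next
  fix f :: "'a \<Rightarrow> real"
  assume H2: "\<forall>r::real. r \<ge> 0 \<longrightarrow> (\<forall>\<epsilon>::real. \<epsilon> > 0 \<longrightarrow>
            (\<exists>q :: nat poly. \<exists>w\<in>P. \<exists>n::nat. n > 0 \<and>
               eval_nat_poly q r \<le> \<epsilon> * real n \<and>
               (1 + w) * (of_nat n * a + eval_nat_poly q v) \<in> P))"
    and f: "ring_hom_real f \<and> (\<forall>x\<in>P. f x \<ge> 0)"
  have hom: "ring_hom_real f" and fP: "\<And>x. x \<in> P \<Longrightarrow> f x \<ge> 0" using f by auto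
  show "f a \<ge> 0"
  proof (rule ccontr)
    assume "\<not> f a \<ge> 0"
    then have fa: "f a < 0" by simp
    have fv: "f v \<ge> 0" using fP v_in by blast
    obtain q w n where c: "w \<in> P" "n > 0" "eval_nat_poly q (f v) \<le> (- f a / 2) * real n"
        "(1 + w) * (of_nat n * a + eval_nat_poly q v) \<in> P"
      using H2 fv fa by (metis neg_0_less_iff_less half_gt_zero)
    have "0 \<le> f ((1 + w) * (of_nat n * a + eval_nat_poly q v))" using fP c(4) by blast
    also have "\<dots> = (1 + f w) * (real n * f a + eval_nat_poly q (f v))"
      using hom hom_of_nat[OF hom] hom_enp[OF hom] unfolding ring_hom_real_def by simp
    finally have h: "0 \<le> (1 + f w) * (real n * f a + eval_nat_poly q (f v))" .
    have "1 + f w > 0" using fP[OF c(1)] by simp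
    then have "0 \<le> real n * f a + eval_nat_poly q (f v)" using h by (simp add: zero_le_mult_iff)
    then have "0 \<le> real n * f a + (- f a / 2) * real n" using c(3) by linarith
    then have "0 \<le> real n * f a / 2" by (simp add: algebra_simps)
    moreover have "real n * f a < 0" using c(2) fa by (simp add: mult_pos_neg)
    ultimately show False by simp
  qed
qed

end
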